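(* Let $\mathcal H$ be a well-structured preconditioner set. For all $A,B\in\mathcal S^d_{++}$, $$\|P_{\mathcal H}(B)-P_{\mathcal H}(A)\|_{\mathrm{op}}\le\|B-A\|_{\mathrm{op}}^{1/2}.$$
   Context: $\mathcal S^d_+$ (resp. $\mathcal S^d_{++}$) denotes the set of real symmetric positive semidefinite (resp. positive definite) $d\times d$ matrices; $\langle A,B\rangle=\operatorname{Tr}(A^\top B)$. A set $\mathcal H\subseteq\mathcal S_+^d$ is a well-structured preconditioner set if $\mathcal H=\mathcal S_+^d\cap\mathcal K$ for some set $\mathcal K$ of real $d\times d$ matrices that is closed under scalar multiplication, matrix addition and matrix multiplication and contains the identity $I_d$. For $M\in\mathcal S^d_{++}$, $P_{\mathcal H}(M):=\arg\min_{H\in\mathcal H\cap\mathcal S^d_{++}}\langle M,H^{-1}\rangle+\operatorname{Tr}(H)$ (the minimizer exists and is unique). $\|\cdot\|_{\mathrm{op}}$ is the spectral norm. *)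

theory Defs
  imports "HOL-Analysis.Analysis"
begin

definition sym_mat :: "real^'d^'d \<Rightarrow> bool" where
  "sym_mat A \<longleftrightarrow> transpose A = A"

definition psd :: "real^'d^'d \<Rightarrow> bool" where
  "psd A \<longleftrightarrow> sym_mat A \<and> (\<forall>x. 0 \<le> x \<bullet> (A *v x))"

definition pd :: "real^'d^'d \<Rightarrow> bool" where
  "pd A \<longleftrightarrow> sym_mat A \<and> (\<forall>x. x \<noteq> 0 \<longrightarrow> 0 < x \<bullet> (A *v x))"

definition frob_inner :: "real^'d^'d \<Rightarrow> real^'d^'d \<Rightarrow> real" where
  "frob_inner A B = trace (transpose A ** B)"

definition well_structured :: "(real^'d^'d) set \<Rightarrow> bool" where
  "well_structured \<H> \<longleftrightarrow> (\<exists>K :: (real^'d^'d) set.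
      (\<forall>c A. A \<in> K \<longrightarrow> c *\<^sub>R A \<in> K) \<and>
      (\<forall>A B. A \<in> K \<longrightarrow> B \<in> K \<longrightarrow> A + B \<in> K) \<and>
      (\<forall>A B. A \<in> K \<longrightarrow> B \<in> K \<longrightarrow> A ** B \<in> K) \<and>
      mat 1 \<in> K \<and>
      \<H> = {H. psd H} \<inter> K)"

definition precond_obj :: "real^'d^'d \<Rightarrow> real^'d^'d \<Rightarrow> real" where
  "precond_obj M H = frob_inner M (matrix_inv H) + trace H"

definition P_H :: "(real^'d^'d) set \<Rightarrow> real^'d^'d \<Rightarrow> real^'d^'d" where
  "P_H \<H> M = (THE H. H \<in> \<H> \<and> pd H \<and>
       (\<forall>H'. H' \<in> \<H> \<and> pd H' \<longrightarrow> precond_obj M H \<le> precond_obj M H'))"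

definition op_norm :: "real^'d^'d \<Rightarrow> real" where
  "op_norm A = onorm (\<lambda>x. A *v x)"

end

theory Submission
  imports Defs
begin

definition outer :: "real^'n \<Rightarrow> real^'n^'n" where
  "outer b = (\<chi> i j. b$i * b$j)"

definition calc :: "(real^'n) set \<Rightarrow> (real^'n \<Rightarrow> real) \<Rightarrow> real^'n^'n" where
  "calc B h = (\<Sum>b\<in>B. h b *\<^sub>R outer b)"

definition orthonormal :: "(real^'n) set \<Rightarrow> bool" where
  "orthonormal B \<longleftrightarrow> finite B \<and> (\<forall>b\<in>B. \<forall>c\<in>B. b \<bullet> c = (if b = c then 1 else 0))
      \<and> (\<forall>x. x = (\<Sum>b\<in>B. (b \<bullet> x) *\<^sub>R b))"

lemma outer_mulv: "outer b *v x = (b \<bullet> x) *\<^sub>R b"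
  by (simp add: outer_def matrix_vector_mult_def inner_vec_def vec_eq_iff sum_distrib_left sum_distrib_right mult.commute mult.left_commute)

lemma sum_mulv: "(\<Sum>b\<in>B. f b) *v x = (\<Sum>b\<in>B. f b *v x)" for f :: "'a \<Rightarrow> real^'n^'m"
  by (induction B rule: infinite_finite_induct) (auto simp: matrix_vector_mult_add_rdistrib)

lemma scaleR_mulv: "(c *\<^sub>R A) *v x = c *\<^sub>R (A *v x)" for A :: "real^'n^'m"
  by (simp add: vec_eq_iff matrix_vector_mult_def sum_distrib_left mult.assoc)

lemma calc_mulv: "calc B h *v x = (\<Sum>b\<in>B. (h b * (b \<bullet> x)) *\<^sub>R b)"
  unfolding calc_def by (simp add: sum_mulv scaleR_mulv outer_mulv)

lemma orthoD:
  assumes "orthonormal B"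
  shows "finite B" "\<And>b c. b \<in> B \<Longrightarrow> c \<in> B \<Longrightarrow> b \<bullet> c = (if b = c then 1 else 0)"
    "\<And>x. x = (\<Sum>b\<in>B. (b \<bullet> x) *\<^sub>R b)"
  using assms unfolding orthonormal_def by auto

lemma ortho_inner_sum:
  assumes "orthonormal B" "b \<in> B"
  shows "b \<bullet> (\<Sum>c\<in>B. f c *\<^sub>R c) = f b"
proof -
  have "b \<bullet> (\<Sum>c\<in>B. f c *\<^sub>R c) = (\<Sum>c\<in>B. f c * (b \<bullet> c))"
    by (simp add: inner_sum_right)
  also have "\<dots> = (\<Sum>c\<in>B. if c = b then f c else 0)"
    by (rule sum.cong) (use orthoD(2)[OF assms(1)] assms(2) in auto)
  also have "\<dots> = f b" using orthoD(1)[OF assms(1)] assms(2) by simp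
  finally show ?thesis .
qed

lemma calc_mult:
  assumes "orthonormal B"
  shows "calc B h ** calc B k = calc B (\<lambda>b. h b * k b)"
proof -
  have "(calc B h ** calc B k) *v x = calc B (\<lambda>b. h b * k b) *v x" for x
  proof -
    have "(calc B h ** calc B k) *v x = calc B h *v (calc B k *v x)"
      by (simp add: matrix_vector_mul_assoc)
    also have "\<dots> = (\<Sum>b\<in>B. (h b * (b \<bullet> (\<Sum>c\<in>B. (k c * (c \<bullet> x)) *\<^sub>R c))) *\<^sub>R b)"
      by (simp add: calc_mulv)
    also have "\<dots> = (\<Sum>b\<in>B. (h b * (k b * (b \<bullet> x))) *\<^sub>R b)"
      by (rule sum.cong) (simp_all add: ortho_inner_sum[OF assms])
    finally show ?thesis by (simp add: calc_mulv mult.assoc)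
  qed
  then show ?thesis by (simp add: matrix_eq)
qed

lemma calc_one:
  assumes "orthonormal B"
  shows "calc B (\<lambda>_. 1) = mat 1"
  by (simp add: matrix_eq calc_mulv flip: orthoD(3)[OF assms])

lemma calc_cong:
  "(\<And>b. b \<in> B \<Longrightarrow> h b = k b) \<Longrightarrow> calc B h = calc B k"
  unfolding calc_def by (rule sum.cong) auto

lemma calc_add: "calc B (\<lambda>b. h b + k b) = calc B h + calc B k"
  unfolding calc_def by (simp add: scaleR_add_left sum.distrib)

lemma calc_diff: "calc B (\<lambda>b. h b - k b) = calc B h - calc B k"
  unfolding calc_def by (simp add: scaleR_diff_left sum_subtractf)

lemma calc_scale: "calc B (\<lambda>b. c * h b) = c *\<^sub>R calc B h"
  unfolding calc_def by (simp add: scaleR_sum_right)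

lemma calc_sum: "calc B (\<lambda>b. \<Sum>m\<in>M. f m b) = (\<Sum>m\<in>M. calc B (f m))"
  unfolding calc_def by (simp add: scaleR_sum_left sum.swap[of _ B M])

lemma transpose_sum: "transpose (\<Sum>b\<in>B. f b) = (\<Sum>b\<in>B. transpose (f b))"
  by (induction B rule: infinite_finite_induct) (auto simp: transpose_def vec_eq_iff)

lemma transpose_calc: "transpose (calc B h) = calc B h"
  unfolding calc_def transpose_sum
  by (rule sum.cong) (auto simp: transpose_def outer_def vec_eq_iff mult.commute)

lemma calc_eigen:
  assumes "orthonormal B" "b \<in> B"
  shows "calc B h *v b = h b *\<^sub>R b"
proof -
  have "calc B h *v b = (\<Sum>c\<in>B. (if c = b then h c else 0) *\<^sub>R c)"
    unfolding calc_mulv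
    by (rule sum.cong) (use orthoD(2)[OF assms(1)] assms(2) in \<open>auto simp: inner_commute\<close>)
  also have "\<dots> = h b *\<^sub>R b" using orthoD(1)[OF assms(1)] assms(2)
    by (simp add: if_distrib[of "\<lambda>t. t *\<^sub>R _"] sum.delta' cong: if_cong)
  finally show ?thesis .
qed

lemma calc_quad:
  assumes "orthonormal B"
  shows "x \<bullet> (calc B h *v x) = (\<Sum>b\<in>B. h b * (b \<bullet> x)^2)"
  by (simp add: calc_mulv inner_sum_right power2_eq_square inner_commute mult.assoc)

lemma parseval:
  assumes "orthonormal B"
  shows "x \<bullet> x = (\<Sum>b\<in>B. (b \<bullet> x)^2)"
  using calc_quad[OF assms, of x "\<lambda>_. 1"] by (simp add: calc_one[OF assms])

lemma calc_norm2:
  assumes "orthonormal B"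
  shows "(calc B h *v x) \<bullet> (calc B h *v x) = (\<Sum>b\<in>B. (h b * (b \<bullet> x))^2)"
proof -
  have "(calc B h *v x) \<bullet> (calc B h *v x) = (\<Sum>b\<in>B. (h b * (b \<bullet> x)) * (b \<bullet> (calc B h *v x)))"
    by (simp add: calc_mulv[of B h x] inner_sum_left)
  also have "\<dots> = (\<Sum>b\<in>B. (h b * (b \<bullet> x))^2)"
    by (rule sum.cong) (simp_all add: calc_mulv ortho_inner_sum[OF assms] power2_eq_square)
  finally show ?thesis .
qed

lemma calc_norm_bound:
  assumes "orthonormal B" "\<And>b. b \<in> B \<Longrightarrow> \<bar>h b\<bar> \<le> c" "0 \<le> c"
  shows "norm (calc B h *v x) \<le> c * norm x"
proof -
  have "(norm (calc B h *v x))^2 = (\<Sum>b\<in>B. (h b)^2 * (b \<bullet> x)^2)"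
    by (simp add: power2_norm_eq_inner calc_norm2[OF assms(1)] power_mult_distrib)
  also have "\<dots> \<le> (\<Sum>b\<in>B. c^2 * (b \<bullet> x)^2)"
  proof (rule sum_mono)
    fix b assume "b \<in> B"
    then have "(h b)^2 \<le> c^2" using assms(2)[of b]
      by (metis abs_ge_zero abs_le_square_iff power2_abs abs_of_nonneg assms(3) order_trans)
    then show "(h b)^2 * (b \<bullet> x)^2 \<le> c^2 * (b \<bullet> x)^2"
      by (simp add: mult_right_mono)
  qed
  also have "\<dots> = (c * norm x)^2"
    by (simp add: sum_distrib_left[symmetric] power_mult_distrib power2_norm_eq_inner parseval[OF assms(1)])
  finally show ?thesis
    using assms(3) by (meson norm_ge_zero power2_le_imp_le zero_le_mult_iff)
qed

lemma inner_outer: "Z \<bullet> outer b = b \<bullet> (Z *v b)" for Z :: "real^'n^'n"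
  by (simp add: inner_vec_def outer_def matrix_vector_mult_def sum_distrib_left mult.assoc mult.left_commute)

lemma inner_calc: "Z \<bullet> calc B h = (\<Sum>b\<in>B. h b * (b \<bullet> (Z *v b)))" for Z :: "real^'n^'n"
  by (simp add: calc_def inner_sum_right inner_outer)

lemma trace_sum: "trace (\<Sum>b\<in>B. f b) = (\<Sum>b\<in>B. trace (f b))"
  unfolding trace_def by (simp add: sum_component sum.swap[of _ B])

lemma trace_outer: "trace (outer b) = b \<bullet> b"
  by (simp add: trace_def outer_def inner_vec_def)

lemma trace_calc:
  assumes "orthonormal B"
  shows "trace (calc B h) = (\<Sum>b\<in>B. h b)"
proof -
  have "trace (calc B h) = (\<Sum>b\<in>B. trace (h b *\<^sub>R outer b))"
    unfolding calc_def trace_sum ..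
  also have "\<dots> = (\<Sum>b\<in>B. h b)"
  proof (rule sum.cong)
    fix b assume "b \<in> B"
    have "trace (h b *\<^sub>R outer b) = h b * trace (outer b)"
      by (simp add: trace_def sum_distrib_left)
    then show "trace (h b *\<^sub>R outer b) = h b"
      using orthoD(2)[OF assms \<open>b \<in> B\<close> \<open>b \<in> B\<close>] by (simp add: trace_outer)
  qed simp
  finally show ?thesis .
qed

lemma mv_add: "A *v (x + y) = A *v x + A *v y" for A :: "real^'n^'m"
  by (rule linear_add[OF matrix_vector_mul_linear])
lemma mv_diff: "A *v (x - y) = A *v x - A *v y" for A :: "real^'n^'m"
  by (rule linear_diff[OF matrix_vector_mul_linear])
lemma mv_scale: "A *v (c *\<^sub>R x) = c *\<^sub>R (A *v x)" for A :: "real^'n^'m"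
  by (rule linear_scale[OF matrix_vector_mul_linear])
lemma mv_sum: "A *v (\<Sum>i\<in>I. f i) = (\<Sum>i\<in>I. A *v f i)" for A :: "real^'n^'m"
  by (rule linear_sum[OF matrix_vector_mul_linear])

lemma sym_inner:
  assumes "sym_mat X"
  shows "(X *v x) \<bullet> y = x \<bullet> (X *v y)"
proof -
  have "x \<bullet> (X *v y) = (x v* X) \<bullet> y" by (simp add: dot_lmul_matrix)
  also have "x v* X = X *v x"
    using assms unfolding sym_mat_def by (metis vector_transpose_matrix)
  finally show ?thesis by simp
qed

lemma quad_zero:
  fixes a c :: real
  assumes "\<And>t. 2*t*a + t^2*c \<le> 0" "0 \<le> a"
  shows "a = 0"
proof (rule ccontr)
  assume "a \<noteq> 0"
  then have a: "a > 0" using assms(2) by simp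
  define t where "t = a / (\<bar>c\<bar> + 1)"
  have t: "t > 0" using a by (simp add: t_def)
  have cp: "\<bar>c\<bar> + 1 > 0" by simp
  have e: "t * (\<bar>c\<bar> + 1) = a" unfolding t_def using cp by simp
  have "- \<bar>c\<bar> \<le> c" by simp
  then have "t * (- \<bar>c\<bar>) \<le> t * c" using t by (intro mult_left_mono) auto
  then have "t * c > - a" using e t by (simp add: ring_distribs)
  then have "2*a + t*c > 0" using a by linarith
  then have "t * (2*a + t*c) > 0" using t by simp
  moreover have "2*t*a + t^2*c = t * (2*a + t*c)" by (simp add: power2_eq_square algebra_simps)
  ultimately show False using assms(1)[of t] by linarith
qed


lemma eig_exists:
  fixes X :: "real^'n^'n"
  assumes X: "sym_mat X" and fB: "finite B" and eig: "\<And>b. b \<in> B \<Longrightarrow> X *v b = l b *\<^sub>R b"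
    and r: "\<forall>b\<in>B. b \<bullet> r = 0" "r \<noteq> 0"
  shows "\<exists>v. (\<forall>b\<in>B. b \<bullet> v = 0) \<and> norm v = 1 \<and> X *v v = (v \<bullet> (X *v v)) *\<^sub>R v"
proof -
  define W where "W = (\<Inter>b\<in>B. {w. b \<bullet> w = 0})"
  have inW: "w \<in> W \<longleftrightarrow> (\<forall>b\<in>B. b \<bullet> w = 0)" for w unfolding W_def by auto
  have "closed W" unfolding W_def by (intro closed_INT ballI closed_hyperplane)
  define T where "T = W \<inter> sphere 0 1"
  have "compact T" unfolding T_def using compact_Int_closed[OF compact_sphere \<open>closed W\<close>] by (simp add: Int_commute)
  have "r /\<^sub>R norm r \<in> T" using r by (simp add: T_def inW inner_scaleR_right)
  then have "T \<noteq> {}" by auto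
  define q where "q = (\<lambda>w. w \<bullet> (X *v w))"
  have "continuous_on T q" unfolding q_def
    by (intro continuous_intros linear_continuous_on matrix_vector_mul_bounded_linear)
  then obtain v where v: "v \<in> T" and vmax: "\<And>y. y \<in> T \<Longrightarrow> q y \<le> q v"
    using continuous_attains_sup[OF \<open>compact T\<close> \<open>T \<noteq> {}\<close>] by blast
  define m where "m = q v"
  have vW: "v \<in> W" and nv: "norm v = 1" using v by (auto simp: T_def)
  have vv: "v \<bullet> v = 1" using nv by (simp add: norm_eq_1)
  have bound: "q w \<le> m * (w \<bullet> w)" if "w \<in> W" for w
  proof (cases "w = 0")
    case True then show ?thesis by (simp add: q_def)
  next
    case False
    have "w /\<^sub>R norm w \<in> T" using that False by (simp add: T_def inW inner_scaleR_right)
    then have "q (w /\<^sub>R norm w) \<le> m" using vmax m_def by blast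
    moreover have "q (w /\<^sub>R norm w) = q w / (norm w)^2"
      by (simp add: q_def mv_scale power2_eq_square divide_inverse mult.assoc mult.commute)
    ultimately have "q w / (norm w)^2 \<le> m" by simp
    then have "q w \<le> m * (norm w)^2" using False by (simp add: pos_divide_le_eq)
    then show ?thesis by (simp add: power2_norm_eq_inner)
  qed
  define z where "z = X *v v - m *\<^sub>R v"
  have "b \<bullet> (X *v v) = 0" if "b \<in> B" for b
  proof -
    have "b \<bullet> (X *v v) = (X *v b) \<bullet> v" using sym_inner[OF X] by simp
    also have "\<dots> = l b * (b \<bullet> v)" using eig[OF that] by simp
    finally show ?thesis using vW that by (simp add: inW)
  qed
  then have zW: "z \<in> W" using vW by (simp add: inW z_def inner_diff_right)
  have key: "2*t*(z \<bullet> z) + t^2*(q z - m * (z \<bullet> z)) \<le> 0" for t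
  proof -
    have "v + t *\<^sub>R z \<in> W" using vW zW by (simp add: inW inner_add_right)
    then have h: "q (v + t *\<^sub>R z) \<le> m * ((v + t *\<^sub>R z) \<bullet> (v + t *\<^sub>R z))" by (rule bound)
    have s: "v \<bullet> (X *v z) = z \<bullet> (X *v v)" using sym_inner[OF X, of v z] by (simp add: inner_commute)
    have e1: "q (v + t *\<^sub>R z) = m + 2*t*(z \<bullet> (X *v v)) + t^2 * q z"
      by (simp add: q_def m_def mv_add mv_scale inner_add_left inner_add_right s power2_eq_square algebra_simps)
    have e2: "(v + t *\<^sub>R z) \<bullet> (v + t *\<^sub>R z) = 1 + 2*t*(z \<bullet> v) + t^2 * (z \<bullet> z)"
      by (simp add: inner_add_left inner_add_right vv inner_commute power2_eq_square algebra_simps)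
    have e3: "z \<bullet> (X *v v) = z \<bullet> z + m * (z \<bullet> v)"
      by (simp add: z_def inner_diff_right inner_diff_left algebra_simps) 
    show ?thesis using h unfolding e1 e2 e3 by (simp add: algebra_simps)
  qed
  have "z \<bullet> z = 0" by (rule quad_zero[OF key]) simp
  then have "z = 0" by simp
  then have "X *v v = m *\<^sub>R v" by (simp add: z_def)
  then show ?thesis using vW nv by (auto simp: inW m_def q_def)
qed

definition OE :: "real^'n^'n \<Rightarrow> (real^'n) set \<Rightarrow> bool" where
  "OE X B \<longleftrightarrow> finite B \<and> (\<forall>b\<in>B. \<forall>c\<in>B. b \<bullet> c = (if b = c then 1 else 0))
     \<and> (\<forall>b\<in>B. X *v b = (b \<bullet> (X *v b)) *\<^sub>R b)"

lemma OE_card: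
  fixes X :: "real^'n^'n"
  assumes "OE X B"
  shows "card B < CARD('n) + 1"
proof -
  have on: "\<forall>b\<in>B. \<forall>c\<in>B. b \<bullet> c = (if b = c then 1 else 0)" using assms unfolding OE_def by blast
  have "pairwise orthogonal B" using on unfolding pairwise_def orthogonal_def by auto
  moreover have "0 \<notin> B" using on by force
  ultimately have "independent B" by (rule pairwise_orthogonal_independent)
  then have "card B \<le> DIM(real^'n)" using independent_bound by blast
  then show ?thesis by simp
qed

theorem spectral:
  fixes X :: "real^'n^'n"
  assumes X: "sym_mat X"
  shows "\<exists>B. orthonormal B \<and> X = calc B (\<lambda>b. b \<bullet> (X *v b))"
proof -
  have "OE X {}" by (simp add: OE_def)
  then obtain B where B: "OE X B" and Bmax: "\<And>B'. OE X B' \<Longrightarrow> card B' \<le> card B"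
    using ex_has_greatest_nat[of "OE X" "{}" card "CARD('n) + 1"] OE_card by blast
  have fB: "finite B" and on: "\<And>b c. b\<in>B \<Longrightarrow> c\<in>B \<Longrightarrow> b \<bullet> c = (if b = c then 1 else 0)"
    and eig: "\<And>b. b \<in> B \<Longrightarrow> X *v b = (b \<bullet> (X *v b)) *\<^sub>R b"
    using B unfolding OE_def by blast+
  have span: "x = (\<Sum>b\<in>B. (b \<bullet> x) *\<^sub>R b)" for x
  proof (rule ccontr)
    assume ne: "x \<noteq> (\<Sum>b\<in>B. (b \<bullet> x) *\<^sub>R b)"
    define r where "r = x - (\<Sum>b\<in>B. (b \<bullet> x) *\<^sub>R b)"
    have "r \<noteq> 0" using ne by (simp add: r_def)
    have "b \<bullet> r = 0" if "b \<in> B" for b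
    proof -
      have "b \<bullet> (\<Sum>c\<in>B. (c \<bullet> x) *\<^sub>R c) = (\<Sum>c\<in>B. (c \<bullet> x) * (b \<bullet> c))"
        by (simp add: inner_sum_right)
      also have "\<dots> = (\<Sum>c\<in>B. if c = b then c \<bullet> x else 0)"
        by (rule sum.cong) (use on that in auto)
      also have "\<dots> = b \<bullet> x" using fB that by simp
      finally show ?thesis by (simp add: r_def inner_diff_right)
    qed
    then obtain v where v: "\<forall>b\<in>B. b \<bullet> v = 0" "norm v = 1" "X *v v = (v \<bullet> (X *v v)) *\<^sub>R v"
      using eig_exists[OF X fB eig] \<open>r \<noteq> 0\<close> by blast
    have vv: "v \<bullet> v = 1" using v(2) by (simp add: norm_eq_1)
    have "v \<notin> B" using v(1) vv by auto
    have e2: "\<forall>b\<in>insert v B. X *v b = (b \<bullet> (X *v b)) *\<^sub>R b"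
      using eig v(3) by blast
    have e1: "\<forall>b\<in>insert v B. \<forall>c\<in>insert v B. b \<bullet> c = (if b = c then 1 else 0)"
      using on v(1) vv \<open>v \<notin> B\<close> by (auto simp: inner_commute)
    have "OE X (insert v B)"
      unfolding OE_def using fB e1 e2 by blast
    then have "card (insert v B) \<le> card B" by (rule Bmax)
    then show False using \<open>v \<notin> B\<close> fB by simp
  qed
  have ortho: "orthonormal B" unfolding orthonormal_def
  proof (intro conjI)
    show "finite B" by (rule fB)
    show "\<forall>b\<in>B. \<forall>c\<in>B. b \<bullet> c = (if b = c then 1 else 0)" using on by blast
    show "\<forall>x. x = (\<Sum>b\<in>B. (b \<bullet> x) *\<^sub>R b)" using span by (rule allI)
  qed
  have "X *v x = calc B (\<lambda>b. b \<bullet> (X *v b)) *v x" for x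
  proof -
    have "X *v x = X *v (\<Sum>b\<in>B. (b \<bullet> x) *\<^sub>R b)" by (rule arg_cong[where f="(*v) X", OF span])
    also have "\<dots> = (\<Sum>b\<in>B. (b \<bullet> x) *\<^sub>R (X *v b))" by (simp add: mv_sum mv_scale)
    also have "\<dots> = (\<Sum>b\<in>B. ((b \<bullet> (X *v b)) * (b \<bullet> x)) *\<^sub>R b)"
    proof (rule sum.cong)
      fix b assume "b \<in> B"
      show "(b \<bullet> x) *\<^sub>R (X *v b) = ((b \<bullet> (X *v b)) * (b \<bullet> x)) *\<^sub>R b"
        by (subst eig[OF \<open>b \<in> B\<close>]) (simp add: mult.commute)
    qed simp
    finally show ?thesis by (simp add: calc_mulv)
  qed
  then have "X = calc B (\<lambda>b. b \<bullet> (X *v b))" unfolding matrix_eq by blast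
  then show ?thesis using ortho by blast
qed

definition alg :: "(real^'n^'n) set \<Rightarrow> bool" where
  "alg K \<longleftrightarrow> (\<forall>c A. A \<in> K \<longrightarrow> c *\<^sub>R A \<in> K) \<and>
      (\<forall>A B. A \<in> K \<longrightarrow> B \<in> K \<longrightarrow> A + B \<in> K) \<and>
      (\<forall>A B. A \<in> K \<longrightarrow> B \<in> K \<longrightarrow> A ** B \<in> K) \<and> mat 1 \<in> K"

lemma alg_scale: "alg K \<Longrightarrow> A \<in> K \<Longrightarrow> c *\<^sub>R A \<in> K" unfolding alg_def by blast
lemma alg_add: "alg K \<Longrightarrow> A \<in> K \<Longrightarrow> B \<in> K \<Longrightarrow> A + B \<in> K" unfolding alg_def by blast
lemma alg_mult: "alg K \<Longrightarrow> A \<in> K \<Longrightarrow> B \<in> K \<Longrightarrow> A ** B \<in> K" unfolding alg_def by blast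
lemma alg_one: "alg K \<Longrightarrow> mat 1 \<in> K" unfolding alg_def by blast
lemma alg_zero: "alg K \<Longrightarrow> 0 \<in> K" by (metis alg_scale alg_one scale_zero_left)
lemma alg_diff: "alg K \<Longrightarrow> A \<in> K \<Longrightarrow> B \<in> K \<Longrightarrow> A - B \<in> K"
  using alg_add[of K A "(-1) *\<^sub>R B"] alg_scale[of K B "-1"] by simp
lemma alg_sum: "alg K \<Longrightarrow> (\<And>i. i \<in> I \<Longrightarrow> f i \<in> K) \<Longrightarrow> (\<Sum>i\<in>I. f i) \<in> K"
  by (induction I rule: infinite_finite_induct) (auto simp: alg_zero alg_add)

lemma calc_prod_in_K:
  assumes K: "alg K" and B: "orthonormal B" and XK: "calc B l \<in> K" and F: "finite F"
  shows "calc B (\<lambda>b. \<Prod>\<nu>\<in>F. (l b - \<nu>)) \<in> K"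
  using F
proof (induction F rule: finite_induct)
  case empty
  then show ?case using calc_one[OF B] alg_one[OF K] by simp
next
  case (insert \<nu> F)
  have "calc B (\<lambda>b. l b - \<nu>) = calc B l - \<nu> *\<^sub>R mat 1"
    using calc_diff[of B l "\<lambda>_. \<nu>"] calc_scale[of B \<nu> "\<lambda>_. 1"] calc_one[OF B] by simp
  also have "\<dots> \<in> K" using K XK by (intro alg_diff alg_scale alg_one)
  finally have "calc B (\<lambda>b. l b - \<nu>) ** calc B (\<lambda>b. \<Prod>\<nu>\<in>F. (l b - \<nu>)) \<in> K"
    using insert.IH K by (intro alg_mult)
  then show ?case using insert.hyps by (simp add: calc_mult[OF B])
qed

lemma calc_indicator_in_K:
  assumes K: "alg K" and B: "orthonormal B" and XK: "calc B l \<in> K"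
  shows "calc B (\<lambda>b. if l b = \<mu> then 1 else 0) \<in> K"
proof -
  define L where "L = l ` B - {\<mu>}"
  have fL: "finite L" unfolding L_def using orthoD(1)[OF B] by simp
  define c where "c = (\<Prod>\<nu>\<in>L. (\<mu> - \<nu>))"
  have "c \<noteq> 0" unfolding c_def using fL by (simp add: L_def)
  have "calc B (\<lambda>b. if l b = \<mu> then 1 else 0) = calc B (\<lambda>b. (1/c) * (\<Prod>\<nu>\<in>L. (l b - \<nu>)))"
  proof (rule calc_cong)
    fix b assume b: "b \<in> B"
    show "(if l b = \<mu> then 1 else 0) = (1/c) * (\<Prod>\<nu>\<in>L. (l b - \<nu>))"
    proof (cases "l b = \<mu>")
      case True then show ?thesis using \<open>c \<noteq> 0\<close> by (simp add: c_def)
    next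
      case False
      then have "l b \<in> L" using b by (simp add: L_def)
      then have "(\<Prod>\<nu>\<in>L. (l b - \<nu>)) = 0" using fL by (intro prod_zero) auto
      then show ?thesis using False by simp
    qed
  qed
  also have "\<dots> = (1/c) *\<^sub>R calc B (\<lambda>b. \<Prod>\<nu>\<in>L. (l b - \<nu>))" by (rule calc_scale)
  also have "\<dots> \<in> K" using calc_prod_in_K[OF K B XK fL] K by (intro alg_scale)
  finally show ?thesis .
qed

lemma calc_fun_in_K:
  assumes K: "alg K" and B: "orthonormal B" and XK: "calc B l \<in> K"
  shows "calc B (\<lambda>b. f (l b)) \<in> K"
proof -
  have fin: "finite (l ` B)" using orthoD(1)[OF B] by simp
  have "calc B (\<lambda>b. f (l b)) = calc B (\<lambda>b. \<Sum>\<mu>\<in>l ` B. f \<mu> * (if l b = \<mu> then 1 else 0))"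
  proof (rule calc_cong)
    fix b assume "b \<in> B"
    then show "f (l b) = (\<Sum>\<mu>\<in>l ` B. f \<mu> * (if l b = \<mu> then 1 else 0))"
      using fin by (simp add: if_distrib[of "\<lambda>t. f _ * t"] sum.delta cong: if_cong)
  qed
  also have "\<dots> = (\<Sum>\<mu>\<in>l ` B. f \<mu> *\<^sub>R calc B (\<lambda>b. if l b = \<mu> then 1 else 0))"
    by (simp add: calc_sum calc_scale)
  also have "\<dots> \<in> K"
    by (intro alg_sum[OF K] alg_scale[OF K] calc_indicator_in_K[OF K B XK])
  finally show ?thesis .
qed

lemma frob_eq_inner: "frob_inner A B = A \<bullet> B" for A B :: "real^'n^'n"
proof -
  have "frob_inner A B = (\<Sum>i\<in>UNIV. \<Sum>k\<in>UNIV. A$k$i * B$k$i)"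
    by (simp add: frob_inner_def trace_def matrix_matrix_mult_def transpose_def)
  also have "\<dots> = (\<Sum>k\<in>UNIV. \<Sum>i\<in>UNIV. A$k$i * B$k$i)" by (rule sum.swap)
  also have "\<dots> = A \<bullet> B" by (simp add: inner_vec_def)
  finally show ?thesis .
qed

lemma sym_transpose_eq: "sym_mat Y \<Longrightarrow> Y$i$j = Y$j$i"
proof -
  assume "sym_mat Y"
  then have "transpose Y = Y" unfolding sym_mat_def .
  moreover have "(transpose Y)$i$j = Y$j$i" by (simp add: transpose_def)
  ultimately show ?thesis by simp
qed

lemma sym_calc: "sym_mat (calc B h)"
  unfolding sym_mat_def by (rule transpose_calc)

lemma psd_calc:
  assumes B: "orthonormal B" and h: "\<And>b. b \<in> B \<Longrightarrow> 0 \<le> h b"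
  shows "psd (calc B h)"
  unfolding psd_def
proof (intro conjI allI sym_calc)
  fix x :: "real^'a"
  show "0 \<le> x \<bullet> (calc B h *v x)" unfolding calc_quad[OF B]
    by (rule sum_nonneg) (simp add: h)
qed

lemma pd_calc:
  assumes B: "orthonormal B" and h: "\<And>b. b \<in> B \<Longrightarrow> 0 < h b"
  shows "pd (calc B h)"
  unfolding pd_def
proof (intro conjI allI impI sym_calc)
  fix x :: "real^'a" assume "x \<noteq> 0"
  have fB: "finite B" using orthoD(1)[OF B] .
  have nn: "\<forall>b\<in>B. 0 \<le> h b * (b \<bullet> x)^2" using h by (simp add: less_imp_le)
  show "0 < x \<bullet> (calc B h *v x)"
  proof (rule ccontr)
    assume "\<not> 0 < x \<bullet> (calc B h *v x)"
    then have "(\<Sum>b\<in>B. h b * (b \<bullet> x)^2) = 0"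
      using sum_nonneg[of B "\<lambda>b. h b * (b \<bullet> x)^2"] nn by (simp add: calc_quad[OF B])
    then have "\<forall>b\<in>B. h b * (b \<bullet> x)^2 = 0"
      using sum_nonneg_eq_0_iff[OF fB, of "\<lambda>b. h b * (b \<bullet> x)^2"] nn by simp
    then have "\<forall>b\<in>B. (b \<bullet> x)^2 = 0" using h by force
    then have "x \<bullet> x = 0" by (simp add: parseval[OF B])
    then show False using \<open>x \<noteq> 0\<close> by simp
  qed
qed

lemma eig_nonneg: "orthonormal B \<Longrightarrow> b \<in> B \<Longrightarrow> psd X \<Longrightarrow> 0 \<le> b \<bullet> (X *v b)"
  unfolding psd_def by blast

lemma eig_pos: "orthonormal B \<Longrightarrow> b \<in> B \<Longrightarrow> pd X \<Longrightarrow> 0 < b \<bullet> (X *v b)"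
proof -
  assume B: "orthonormal B" and b: "b \<in> B" and X: "pd X"
  have "b \<bullet> b = 1" using orthoD(2)[OF B b b] by simp
  then have "b \<noteq> 0" by auto
  then show ?thesis using X unfolding pd_def by blast
qed

lemma op_norm_bound: "norm (A *v x) \<le> op_norm A * norm x" for A :: "real^'n^'n"
  unfolding op_norm_def by (rule onorm[OF matrix_vector_mul_bounded_linear])

lemma op_norm_le: "(\<And>x. norm (A *v x) \<le> c * norm x) \<Longrightarrow> op_norm A \<le> c" for A :: "real^'n^'n"
  unfolding op_norm_def by (rule onorm_le)

lemma unit_quad_bound:
  assumes "norm v = 1"
  shows "\<bar>v \<bullet> (Z *v v)\<bar> \<le> op_norm Z"
proof -
  have "\<bar>v \<bullet> (Z *v v)\<bar> \<le> norm v * norm (Z *v v)" by (rule Cauchy_Schwarz_ineq2)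
  also have "\<dots> \<le> op_norm Z" using op_norm_bound[of Z v] assms by simp
  finally show ?thesis .
qed

lemma calc_op_norm:
  assumes B: "orthonormal B" and h: "\<And>b. b \<in> B \<Longrightarrow> \<bar>h b\<bar> \<le> c" and c: "0 \<le> c"
  shows "op_norm (calc B h) \<le> c"
  by (rule op_norm_le) (rule calc_norm_bound[OF B h c])

lemma spectral_sym:
  assumes "sym_mat X"
  obtains B where "orthonormal B" "X = calc B (\<lambda>b. b \<bullet> (X *v b))"
  using spectral[OF assms] by blast

lemma mm_sub_l: "A ** (B - C) = A ** B - A ** C" for A B C :: "real^'n^'n"
  by (simp add: matrix_eq matrix_vector_mult_diff_rdistrib matrix_vector_mult_diff_distrib
      flip: matrix_vector_mul_assoc)
lemma mm_sub_r: "(A - B) ** C = A ** C - B ** C" for A B C :: "real^'n^'n"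
  by (simp add: matrix_eq matrix_vector_mult_diff_rdistrib flip: matrix_vector_mul_assoc)

lemma sym_diff: "sym_mat A \<Longrightarrow> sym_mat B \<Longrightarrow> sym_mat (A - B)"
  unfolding sym_mat_def by (simp add: transpose_def vec_eq_iff)
lemma sym_add: "sym_mat A \<Longrightarrow> sym_mat B \<Longrightarrow> sym_mat (A + B)"
  unfolding sym_mat_def by (simp add: transpose_def vec_eq_iff)
lemma sym_scale: "sym_mat A \<Longrightarrow> sym_mat (c *\<^sub>R A)"
  unfolding sym_mat_def by (simp add: transpose_def vec_eq_iff)
lemma sym_zero: "sym_mat 0"
  unfolding sym_mat_def by (simp add: transpose_def vec_eq_iff)

lemma proj_exists:
  fixes M :: "real^'n^'n"
  assumes K: "alg K"
  shows "\<exists>N. N \<in> K \<and> sym_mat N \<and> (\<forall>W. W \<in> K \<and> sym_mat W \<longrightarrow> (M - N) \<bullet> W = 0)"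
proof -
  define S where "S = {W. W \<in> K \<and> sym_mat W}"
  have "subspace S" unfolding subspace_def S_def
    using alg_zero[OF K] alg_add[OF K] alg_scale[OF K] sym_zero sym_add sym_scale by blast
  then have sp: "span S = S" by simp
  obtain y z where y: "y \<in> span S" and z: "\<And>w. w \<in> span S \<Longrightarrow> orthogonal z w" and M: "M = y + z"
    using orthogonal_subspace_decomp_exists[of S M] by blast
  have "y \<in> S" using y unfolding sp .
  then have "y \<in> K \<and> sym_mat y" by (simp add: S_def)
  moreover have "\<forall>W. W \<in> K \<and> sym_mat W \<longrightarrow> (M - y) \<bullet> W = 0"
  proof (intro allI impI)
    fix W assume "W \<in> K \<and> sym_mat W"
    then have "W \<in> span S" unfolding sp by (simp add: S_def)
    then have "z \<bullet> W = 0" using z by (simp add: orthogonal_def)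
    then show "(M - y) \<bullet> W = 0" using M by simp
  qed
  ultimately show ?thesis by blast
qed

lemma inner_chi:
  assumes B: "orthonormal B"
  shows "Z \<bullet> calc B (\<lambda>b. if l b = \<mu> then 1 else 0) = (\<Sum>b\<in>B. if l b = \<mu> then b \<bullet> (Z *v b) else 0)"
  unfolding inner_calc by (rule sum.cong) auto

lemma pd_proj:
  fixes M N :: "real^'n^'n"
  assumes K: "alg K" and M: "pd M" and NK: "N \<in> K" "sym_mat N"
    and orth: "\<forall>W. W \<in> K \<and> sym_mat W \<longrightarrow> (M - N) \<bullet> W = 0"
  shows "pd N"
proof -
  define l where "l = (\<lambda>b. b \<bullet> (N *v b))"
  obtain B where B: "orthonormal B" and NB: "N = calc B l"
    using spectral_sym[OF NK(2)] unfolding l_def by blast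
  have fB: "finite B" using orthoD(1)[OF B] .
  have "\<forall>b\<in>B. 0 < l b"
  proof (rule ccontr)
    assume "\<not> (\<forall>b\<in>B. 0 < l b)"
    then obtain b0 where b0: "b0 \<in> B" "l b0 \<le> 0" by force
    define \<mu> where "\<mu> = l b0"
    define Q where "Q = calc B (\<lambda>b. if l b = \<mu> then 1 else 0)"
    have "calc B l \<in> K" using NK NB by simp
    then have "calc B (\<lambda>b. (\<lambda>t. if t = \<mu> then 1 else 0) (l b)) \<in> K"
      by (rule calc_fun_in_K[OF K B])
    then have QK: "Q \<in> K" by (simp add: Q_def)
    have symQ: "sym_mat Q" unfolding Q_def by (rule sym_calc)
    have "(M - N) \<bullet> Q = 0" using orth QK symQ by blast
    then have eq: "M \<bullet> Q = N \<bullet> Q" by (simp add: inner_diff_left)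
    have "N \<bullet> Q = (\<Sum>b\<in>B. if l b = \<mu> then l b else 0)"
      unfolding Q_def inner_chi[OF B] l_def ..
    also have "\<dots> \<le> 0" using b0 by (intro sum_nonpos) (simp add: \<mu>_def)
    finally have "N \<bullet> Q \<le> 0" .
    moreover have "M \<bullet> Q > 0"
      unfolding Q_def inner_chi[OF B]
    proof (rule sum_pos2[OF fB b0(1)])
      show "0 < (if l b0 = \<mu> then b0 \<bullet> (M *v b0) else 0)"
        using eig_pos[OF B b0(1) M] by (simp add: \<mu>_def)
      show "\<And>b. b \<in> B \<Longrightarrow> 0 \<le> (if l b = \<mu> then b \<bullet> (M *v b) else 0)"
        using eig_pos[OF B _ M] by (simp add: less_imp_le)
    qed
    ultimately show False using eq by simp
  qed
  then have "pd (calc B l)" by (intro pd_calc[OF B]) auto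
  then show ?thesis using NB by simp
qed

lemma contract:
  fixes M1 M2 N1 N2 :: "real^'n^'n"
  assumes K: "alg K" and N1: "N1 \<in> K" "sym_mat N1" and N2: "N2 \<in> K" "sym_mat N2"
    and o1: "\<forall>W. W \<in> K \<and> sym_mat W \<longrightarrow> (M1 - N1) \<bullet> W = 0"
    and o2: "\<forall>W. W \<in> K \<and> sym_mat W \<longrightarrow> (M2 - N2) \<bullet> W = 0"
  shows "op_norm (N2 - N1) \<le> op_norm (M2 - M1)"
proof -
  define D where "D = N2 - N1"
  define Z where "Z = M2 - M1"
  define c where "c = op_norm Z"
  have c0: "0 \<le> c" unfolding c_def op_norm_def by (rule onorm_pos_le) simp
  have DK: "D \<in> K" "sym_mat D" using N1 N2 K by (auto simp: D_def intro: alg_diff sym_diff)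
  have oD: "Z \<bullet> W = D \<bullet> W" if "W \<in> K" "sym_mat W" for W
    using o1 o2 that by (simp add: Z_def D_def inner_diff_left algebra_simps)
  define l where "l = (\<lambda>b. b \<bullet> (D *v b))"
  obtain B where B: "orthonormal B" and DB: "D = calc B l"
    using spectral_sym[OF DK(2)] unfolding l_def by blast
  have fB: "finite B" using orthoD(1)[OF B] .
  have "\<bar>l b0\<bar> \<le> c" if b0: "b0 \<in> B" for b0
  proof -
    define \<mu> where "\<mu> = l b0"
    define Q where "Q = calc B (\<lambda>b. if l b = \<mu> then 1 else 0)"
    have "calc B l \<in> K" using DK DB by simp
    then have "calc B (\<lambda>b. (\<lambda>t. if t = \<mu> then 1 else 0) (l b)) \<in> K"
      by (rule calc_fun_in_K[OF K B])
    then have QK: "Q \<in> K" by (simp add: Q_def)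
    have symQ: "sym_mat Q" unfolding Q_def by (rule sym_calc)
    have eq: "Z \<bullet> Q = D \<bullet> Q" using oD[OF QK symQ] .
    define n where "n = (\<Sum>b\<in>B. if l b = \<mu> then 1 else 0::real)"
    have n0: "n > 0" unfolding n_def
      by (rule sum_pos2[OF fB b0]) (auto simp: \<mu>_def)
    have "D \<bullet> Q = (\<Sum>b\<in>B. if l b = \<mu> then l b else 0)"
      unfolding Q_def inner_chi[OF B] l_def ..
    also have "\<dots> = (\<Sum>b\<in>B. \<mu> * (if l b = \<mu> then 1 else 0))"
      by (rule sum.cong) auto
    also have "\<dots> = \<mu> * n" by (simp add: n_def sum_distrib_left)
    finally have DQ: "D \<bullet> Q = \<mu> * n" .
    have "\<bar>Z \<bullet> Q\<bar> = \<bar>\<Sum>b\<in>B. if l b = \<mu> then b \<bullet> (Z *v b) else 0\<bar>"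
      unfolding Q_def inner_chi[OF B] ..
    also have "\<dots> \<le> (\<Sum>b\<in>B. \<bar>if l b = \<mu> then b \<bullet> (Z *v b) else 0\<bar>)" by (rule sum_abs)
    also have "\<dots> \<le> (\<Sum>b\<in>B. c * (if l b = \<mu> then 1 else 0))"
    proof (rule sum_mono)
      fix b assume b: "b \<in> B"
      have "norm b = 1" using orthoD(2)[OF B b b] by (simp add: norm_eq_1)
      then have "\<bar>b \<bullet> (Z *v b)\<bar> \<le> c" unfolding c_def by (rule unit_quad_bound)
      then show "\<bar>if l b = \<mu> then b \<bullet> (Z *v b) else 0\<bar> \<le> c * (if l b = \<mu> then 1 else 0)"
        by simp
    qed
    also have "\<dots> = c * n" by (simp add: n_def sum_distrib_left)
    finally have "\<bar>\<mu>\<bar> * n \<le> c * n" using eq DQ n0 by (simp add: abs_mult)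
    then show ?thesis using n0 by (simp add: \<mu>_def)
  qed
  then have "op_norm (calc B l) \<le> c" by (intro calc_op_norm[OF B _ c0])
  then show ?thesis using DB by (simp add: D_def Z_def c_def)
qed

lemma eig_sq:
  fixes R1 R2 :: "real^'n^'n"
  assumes s1: "sym_mat R1" and s2: "sym_mat R2" and p2: "psd R2" and v: "norm v = 1"
    and ev: "(R1 - R2) *v v = lam *\<^sub>R v" and lam: "0 \<le> lam"
  shows "lam^2 \<le> v \<bullet> ((R1 ** R1 - R2 ** R2) *v v)"
proof -
  define a where "a = R1 *v v"
  define b where "b = R2 *v v"
  have ab: "a = b + lam *\<^sub>R v" using ev by (simp add: a_def b_def matrix_vector_mult_diff_rdistrib algebra_simps)
  have vv: "v \<bullet> v = 1" using v by (simp add: norm_eq_1)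
  have "v \<bullet> ((R1 ** R1 - R2 ** R2) *v v) = v \<bullet> (R1 *v a) - v \<bullet> (R2 *v b)"
    by (simp add: a_def b_def matrix_vector_mult_diff_rdistrib inner_diff_right flip: matrix_vector_mul_assoc)
  also have "\<dots> = a \<bullet> a - b \<bullet> b"
    using sym_inner[OF s1, of v a] sym_inner[OF s2, of v b] by (simp add: a_def b_def)
  also have "\<dots> = 2 * lam * (v \<bullet> b) + lam^2"
    unfolding ab by (simp add: inner_add_left inner_add_right vv inner_commute power2_eq_square algebra_simps)
  finally have e: "v \<bullet> ((R1 ** R1 - R2 ** R2) *v v) = 2 * lam * (v \<bullet> b) + lam^2" .
  have "0 \<le> v \<bullet> b" using p2 unfolding psd_def b_def by blast
  then have "0 \<le> 2 * lam * (v \<bullet> b)" using lam by simp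
  then show ?thesis using e by linarith
qed

lemma hoelder:
  fixes R1 R2 :: "real^'n^'n"
  assumes s1: "sym_mat R1" and s2: "sym_mat R2" and p1: "psd R1" and p2: "psd R2"
  shows "op_norm (R1 - R2) \<le> sqrt (op_norm (R1 ** R1 - R2 ** R2))"
proof -
  define c where "c = op_norm (R1 ** R1 - R2 ** R2)"
  define l where "l = (\<lambda>b. b \<bullet> ((R1 - R2) *v b))"
  obtain B where B: "orthonormal B" and SB: "R1 - R2 = calc B l"
    using spectral_sym[OF sym_diff[OF s1 s2]] unfolding l_def by blast
  have "\<bar>l b\<bar> \<le> sqrt c" if b: "b \<in> B" for b
  proof -
    have nb: "norm b = 1" using orthoD(2)[OF B b b] by (simp add: norm_eq_1)
    have ev: "(R1 - R2) *v b = l b *\<^sub>R b" using calc_eigen[OF B b, of l] SB by simp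
    have q: "\<bar>b \<bullet> ((R1 ** R1 - R2 ** R2) *v b)\<bar> \<le> c" unfolding c_def by (rule unit_quad_bound[OF nb])
    have "(l b)^2 \<le> c"
    proof (cases "0 \<le> l b")
      case True
      have "(l b)^2 \<le> b \<bullet> ((R1 ** R1 - R2 ** R2) *v b)" by (rule eig_sq[OF s1 s2 p2 nb ev True])
      then show ?thesis using q by linarith
    next
      case False
      have ev': "(R2 - R1) *v b = (- l b) *\<^sub>R b" using ev
        by (simp add: matrix_vector_mult_diff_rdistrib algebra_simps)
      have "(- l b)^2 \<le> b \<bullet> ((R2 ** R2 - R1 ** R1) *v b)"
        by (rule eig_sq[OF s2 s1 p1 nb ev']) (use False in simp)
      also have "\<dots> = - (b \<bullet> ((R1 ** R1 - R2 ** R2) *v b))"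
        by (simp add: matrix_vector_mult_diff_rdistrib inner_diff_right)
      finally show ?thesis using q by simp
    qed
    then show ?thesis using real_le_rsqrt[of "\<bar>l b\<bar>" c] by simp
  qed
  moreover have "0 \<le> c" unfolding c_def op_norm_def by (rule onorm_pos_le) simp
  ultimately have "op_norm (calc B l) \<le> sqrt c" by (intro calc_op_norm[OF B]) auto
  then show ?thesis using SB by (simp add: c_def)
qed

lemma inv_props:
  fixes H :: "real^'n^'n"
  assumes K: "alg K" and HK: "H \<in> K" and H: "pd H"
  shows "matrix_inv H \<in> K \<and> sym_mat (matrix_inv H) \<and> pd (matrix_inv H) \<and>
         H ** matrix_inv H = mat 1 \<and> matrix_inv H ** H = mat 1"
proof -
  have sH: "sym_mat H" using H unfolding pd_def by blast
  define l where "l = (\<lambda>b. b \<bullet> (H *v b))"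
  obtain B where B: "orthonormal B" and HB: "H = calc B l"
    using spectral_sym[OF sH] unfolding l_def by blast
  have lp: "\<And>b. b \<in> B \<Longrightarrow> 0 < l b" unfolding l_def using eig_pos[OF B _ H] .
  define G where "G = calc B (\<lambda>b. 1 / l b)"
  have "calc B l \<in> K" using HK HB by simp
  then have "calc B (\<lambda>b. (\<lambda>t. 1 / t) (l b)) \<in> K" by (rule calc_fun_in_K[OF K B])
  then have GK: "G \<in> K" by (simp add: G_def)
  have HG: "H ** G = mat 1"
  proof -
    have "H ** G = calc B (\<lambda>b. l b * (1 / l b))" unfolding HB G_def by (rule calc_mult[OF B])
    also have "\<dots> = calc B (\<lambda>_. 1)" by (rule calc_cong) (use lp in \<open>simp add: less_imp_neq[symmetric]\<close>)
    finally show ?thesis using calc_one[OF B] by simp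
  qed
  have GH: "G ** H = mat 1"
  proof -
    have "G ** H = calc B (\<lambda>b. (1 / l b) * l b)" unfolding HB G_def by (rule calc_mult[OF B])
    also have "\<dots> = calc B (\<lambda>_. 1)" by (rule calc_cong) (use lp in \<open>simp add: less_imp_neq[symmetric]\<close>)
    finally show ?thesis using calc_one[OF B] by simp
  qed
  have "\<exists>G'. H ** G' = mat 1 \<and> G' ** H = mat 1" using HG GH by blast
  then have "H ** matrix_inv H = mat 1 \<and> matrix_inv H ** H = mat 1"
    unfolding matrix_inv_def by (rule someI_ex)
  moreover have "matrix_inv H = G"
  proof -
    have "matrix_inv H = matrix_inv H ** (H ** G)" using HG by simp
    also have "\<dots> = (matrix_inv H ** H) ** G" by (rule matrix_mul_assoc)
    also have "\<dots> = G" using calculation \<open>H ** matrix_inv H = mat 1 \<and> matrix_inv H ** H = mat 1\<close> by simp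
    finally show ?thesis .
  qed
  moreover have "pd G" unfolding G_def by (rule pd_calc[OF B]) (simp add: lp)
  moreover have "sym_mat G" unfolding G_def by (rule sym_calc)
  ultimately show ?thesis using GK by simp
qed

lemma diag_entry:
  fixes Y G :: "real^'n^'n"
  assumes sY: "sym_mat Y"
  shows "(Y ** G ** Y)$j$j = column j Y \<bullet> (G *v column j Y)"
proof -
  have "(Y ** G ** Y)$j$j = (\<Sum>k\<in>UNIV. (\<Sum>i\<in>UNIV. Y$j$i * G$i$k) * Y$k$j)"
    by (simp add: matrix_matrix_mult_def)
  also have "\<dots> = (\<Sum>k\<in>UNIV. \<Sum>i\<in>UNIV. Y$i$j * G$i$k * Y$k$j)"
    by (simp add: sum_distrib_right sym_transpose_eq[OF sY, of j])
  also have "\<dots> = (\<Sum>i\<in>UNIV. \<Sum>k\<in>UNIV. Y$i$j * G$i$k * Y$k$j)" by (rule sum.swap)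
  also have "\<dots> = column j Y \<bullet> (G *v column j Y)"
    by (simp add: inner_vec_def column_def matrix_vector_mult_def sum_distrib_left mult.assoc)
  finally show ?thesis .
qed

lemma trace_YGY:
  fixes Y G :: "real^'n^'n"
  assumes sY: "sym_mat Y" and G: "pd G"
  shows "0 \<le> trace (Y ** G ** Y)" "trace (Y ** G ** Y) = 0 \<Longrightarrow> Y = 0"
proof -
  have tr: "trace (Y ** G ** Y) = (\<Sum>j\<in>UNIV. column j Y \<bullet> (G *v column j Y))"
    unfolding trace_def diag_entry[OF sY] ..
  have nn: "\<forall>j\<in>UNIV. 0 \<le> column j Y \<bullet> (G *v column j Y)"
  proof
    fix j :: 'n
    show "0 \<le> column j Y \<bullet> (G *v column j Y)"
      using G unfolding pd_def by (cases "column j Y = 0") (auto intro: less_imp_le)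
  qed
  show "0 \<le> trace (Y ** G ** Y)" unfolding tr by (rule sum_nonneg) (use nn in blast)
  assume "trace (Y ** G ** Y) = 0"
  then have "\<forall>j\<in>UNIV. column j Y \<bullet> (G *v column j Y) = 0"
    using sum_nonneg_eq_0_iff[of UNIV "\<lambda>j. column j Y \<bullet> (G *v column j Y)"] nn tr by simp
  then have "\<forall>j. column j Y = 0" using G unfolding pd_def by (metis less_irrefl UNIV_I)
  then show "Y = 0" by (simp add: column_def vec_eq_iff)
qed


lemma obj_eq:
  fixes M N R H :: "real^'n^'n"
  assumes K: "alg K" and orth: "\<forall>W. W \<in> K \<and> sym_mat W \<longrightarrow> (M - N) \<bullet> W = 0"
    and sN: "sym_mat N" and RR: "R ** R = N" and HK: "H \<in> K" and H: "pd H"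
  shows "precond_obj M H = trace ((R - H) ** matrix_inv H ** (R - H)) + 2 * trace R"
proof -
  define G where "G = matrix_inv H"
  have G: "G \<in> K" "sym_mat G" "H ** G = mat 1" "G ** H = mat 1"
    using inv_props[OF K HK H] by (simp_all add: G_def)
  have "(M - N) \<bullet> G = 0" using orth G by blast
  then have "frob_inner M G = N \<bullet> G" by (simp add: frob_eq_inner inner_diff_left)
  also have "\<dots> = trace (N ** G)"
    using frob_eq_inner[of N G] sN unfolding frob_inner_def sym_mat_def by simp
  finally have f: "frob_inner M G = trace (N ** G)" .
  have "(R - H) ** G ** (R - H) = (R ** G - mat 1) ** (R - H)"
    by (simp add: mm_sub_r G(3))
  also have "\<dots> = R ** G ** (R - H) - (R - H)" by (simp add: mm_sub_r)
  also have "\<dots> = R ** G ** R - R ** G ** H - (R - H)" by (simp add: mm_sub_l)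
  also have "R ** G ** H = R" by (simp flip: matrix_mul_assoc add: G(4))
  finally have ex: "(R - H) ** G ** (R - H) = R ** G ** R - R - (R - H)" .
  have "trace (R ** G ** R) = trace (R ** (R ** G))" by (rule trace_mul_sym)
  also have "\<dots> = trace (N ** G)" by (simp add: matrix_mul_assoc RR)
  finally have t: "trace (R ** G ** R) = trace (N ** G)" .
  have "trace ((R - H) ** G ** (R - H)) = trace (N ** G) - 2 * trace R + trace H"
    unfolding ex trace_sub t by simp
  then show ?thesis unfolding precond_obj_def G_def[symmetric] f by simp
qed

lemma P_H_eq:
  fixes M N R :: "real^'n^'n"
  assumes K: "alg K" and HH: "\<H> = {H. psd H} \<inter> K"
    and orth: "\<forall>W. W \<in> K \<and> sym_mat W \<longrightarrow> (M - N) \<bullet> W = 0"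
    and sN: "sym_mat N" and RR: "R ** R = N" and RK: "R \<in> K" and R: "pd R"
  shows "P_H \<H> M = R"
proof -
  have sR: "sym_mat R" using R unfolding pd_def by blast
  have psdR: "psd R" using R unfolding pd_def psd_def
    by (metis inner_zero_left less_imp_le order_refl)
  have objR: "precond_obj M R = 2 * trace R"
    using obj_eq[OF K orth sN RR RK R] by (simp add: trace_def)
  have lower: "2 * trace R \<le> precond_obj M H" if "H \<in> \<H>" "pd H" for H
  proof -
    have HK: "H \<in> K" using that HH by blast
    have Gpd: "pd (matrix_inv H)" using inv_props[OF K HK that(2)] by blast
    have sY: "sym_mat (R - H)" using sR that(2) unfolding pd_def by (blast intro: sym_diff)
    show ?thesis using obj_eq[OF K orth sN RR HK that(2)] trace_YGY(1)[OF sY Gpd] by simp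
  qed
  show ?thesis unfolding P_H_def
  proof (rule the_equality)
    show "R \<in> \<H> \<and> pd R \<and> (\<forall>H'. H' \<in> \<H> \<and> pd H' \<longrightarrow> precond_obj M R \<le> precond_obj M H')"
      using HH psdR RK R lower objR by auto
  next
    fix H assume a: "H \<in> \<H> \<and> pd H \<and> (\<forall>H'. H' \<in> \<H> \<and> pd H' \<longrightarrow> precond_obj M H \<le> precond_obj M H')"
    then have HK: "H \<in> K" using HH by blast
    have Gpd: "pd (matrix_inv H)" using inv_props[OF K HK] a by blast
    have sY: "sym_mat (R - H)" using sR a unfolding pd_def by (blast intro: sym_diff)
    have "precond_obj M H \<le> precond_obj M R" using a HH psdR RK R by blast
    then have "trace ((R - H) ** matrix_inv H ** (R - H)) \<le> 0"
      using obj_eq[OF K orth sN RR HK] a objR by simp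
    then have "trace ((R - H) ** matrix_inv H ** (R - H)) = 0"
      using trace_YGY(1)[OF sY Gpd] by linarith
    then have "R - H = 0" by (rule trace_YGY(2)[OF sY Gpd])
    then show "H = R" by simp
  qed
qed

lemma root_data:
  fixes M :: "real^'n^'n"
  assumes K: "alg K" and M: "pd M"
  shows "\<exists>N R. N \<in> K \<and> sym_mat N \<and> (\<forall>W. W \<in> K \<and> sym_mat W \<longrightarrow> (M - N) \<bullet> W = 0)
     \<and> R \<in> K \<and> sym_mat R \<and> psd R \<and> pd R \<and> R ** R = N"
proof -
  obtain N where N: "N \<in> K" "sym_mat N" and orth: "\<forall>W. W \<in> K \<and> sym_mat W \<longrightarrow> (M - N) \<bullet> W = 0"
    using proj_exists[OF K, of M] by blast
  have Npd: "pd N" by (rule pd_proj[OF K M N orth])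
  define l where "l = (\<lambda>b. b \<bullet> (N *v b))"
  obtain B where B: "orthonormal B" and NB: "N = calc B l"
    using spectral_sym[OF N(2)] unfolding l_def by blast
  have lp: "\<And>b. b \<in> B \<Longrightarrow> 0 < l b" unfolding l_def using eig_pos[OF B _ Npd] .
  define R where "R = calc B (\<lambda>b. sqrt (l b))"
  have "calc B l \<in> K" using N NB by simp
  then have RK: "R \<in> K" unfolding R_def by (rule calc_fun_in_K[OF K B])
  have Rpd: "pd R" unfolding R_def by (rule pd_calc[OF B]) (simp add: lp)
  have Rpsd: "psd R" unfolding R_def by (rule psd_calc[OF B]) (simp add: lp less_imp_le)
  have "R ** R = calc B (\<lambda>b. sqrt (l b) * sqrt (l b))" unfolding R_def by (rule calc_mult[OF B])
  also have "\<dots> = calc B l" by (rule calc_cong) (simp add: lp less_imp_le)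
  finally have "R ** R = N" using NB by simp
  then show ?thesis using N orth RK Rpd Rpsd sym_calc[of B] R_def by blast
qed

theorem lemmaA5:
  fixes \<H> :: "(real^'d^'d) set" and A B :: "real^'d^'d"
  assumes "well_structured \<H>" and "pd A" and "pd B"
  shows "op_norm (P_H \<H> B - P_H \<H> A) \<le> sqrt (op_norm (B - A))"
proof -
  obtain K where K: "alg K" and HH: "\<H> = {H. psd H} \<inter> K"
    using assms(1) unfolding well_structured_def alg_def by blast
  obtain NA RA where A: "NA \<in> K" "sym_mat NA" "\<forall>W. W \<in> K \<and> sym_mat W \<longrightarrow> (A - NA) \<bullet> W = 0"
     "RA \<in> K" "sym_mat RA" "psd RA" "pd RA" "RA ** RA = NA"
    using root_data[OF K assms(2)] by blast
  obtain NB RB where B: "NB \<in> K" "sym_mat NB" "\<forall>W. W \<in> K \<and> sym_mat W \<longrightarrow> (B - NB) \<bullet> W = 0"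
     "RB \<in> K" "sym_mat RB" "psd RB" "pd RB" "RB ** RB = NB"
    using root_data[OF K assms(3)] by blast
  have PA: "P_H \<H> A = RA" by (rule P_H_eq[OF K HH A(3) A(2) A(8) A(4) A(7)])
  have PB: "P_H \<H> B = RB" by (rule P_H_eq[OF K HH B(3) B(2) B(8) B(4) B(7)])
  have "op_norm (RB - RA) \<le> sqrt (op_norm (RB ** RB - RA ** RA))"
    by (rule hoelder[OF B(5) A(5) B(6) A(6)])
  also have "\<dots> = sqrt (op_norm (NB - NA))" using A(8) B(8) by simp
  also have "\<dots> \<le> sqrt (op_norm (B - A))"
    using contract[OF K A(1,2) B(1,2) A(3) B(3)] by simp
  finally show ?thesis using PA PB by simp
qed

end
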